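(* Let $k\ge 0$. For every integer $n\ge 0$, $$\|E_{n+1}^k\|_{2,k}^2=\|E_{-n}^k\|_{2,k}^2=\pi\,2^{1-2k}\,n!\,\frac{\Gamma(n+2k+1)}{\Gamma(n+k+1)^2},$$ where $\|E_j^k\|_{2,k}^2=\int_{-\pi}^{\pi}|E_j^k(ix)|^2|\sin x|^{2k}dx$.
   Context: Fix $k\ge 0$. The Cherednik operator of type $A_1$ is $T^k f(x)=f'(x)+2k\,\frac{f(x)-f(-x)}{1-e^{-2x}}-k f(x)$ for $f\in C^1(\mathbb{R})$. On $\mathbb{Z}$ define the partial order $j\triangleleft n$ iff either ($|j|<|n|$ and $|n|-|j|$ is a positive even integer) or ($|j|=|n|$ and $n<j$). Let $dm_k(x)=|\sin x|^{2k}dx$ on $[-\pi,\pi]$ and $(f,g)_k=\int_{-\pi}^{\pi}f(x)\overline{g(x)}\,dm_k(x)$. For $n\in\mathbb{Z}$, the non-symmetric Heckman–Opdam polynomial $E_n^k$ is the unique function of the form $E_n^k(z)=e^{nz}+\sum_{j\triangleleft n}c_{n,j}e^{jz}$ ($z\in\mathbb{C}$, finitely many $j$) such that $(E_n^k(i\cdot),e^{ij\cdot})_k=0$ for all $j\triangleleft n$. These satisfy $T^kE_n^k=n_kE_n^k$, where $n_k=n+k$ if $n>0$ and $n_k=n-k$ if $n\le 0$; also $E_0^k=1$, $E_1^k(x)=e^x$, the coefficients $c_{n,j}$ are real and nonnegative, and $\{x\mapsto E_n^k(ix)\}_{n\in\mathbb{Z}}$ is an orthogonal basis of $L^2([-\pi,\pi],dm_k)$.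 *)

theory Defs
  imports "HOL-Analysis.Analysis"
begin

definition tri :: "int \<Rightarrow> int \<Rightarrow> bool" where
  "tri j n \<longleftrightarrow> (\<bar>j\<bar> < \<bar>n\<bar> \<and> even (\<bar>n\<bar> - \<bar>j\<bar>)) \<or> (\<bar>j\<bar> = \<bar>n\<bar> \<and> n < j)"

text \<open>Weight |sin x|^(2k) (with the convention 0^0 = 1).\<close>
definition wk :: "real \<Rightarrow> real \<Rightarrow> real" where
  "wk k x = (if k = 0 then 1 else \<bar>sin x\<bar> powr (2 * k))"

definition ipk :: "real \<Rightarrow> (real \<Rightarrow> complex) \<Rightarrow> (real \<Rightarrow> complex) \<Rightarrow> complex" where
  "ipk k f g = integral {-pi..pi} (\<lambda>x. f x * cnj (g x) * complex_of_real (wk k x))"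

definition expoly :: "int \<Rightarrow> (int \<Rightarrow> complex) \<Rightarrow> complex \<Rightarrow> complex" where
  "expoly n c z = (\<Sum>j\<in>{-\<bar>n\<bar>..\<bar>n\<bar>}. c j * exp (of_int j * z))"

definition E_coeffs :: "real \<Rightarrow> int \<Rightarrow> (int \<Rightarrow> complex) \<Rightarrow> bool" where
  "E_coeffs k n c \<longleftrightarrow> c n = 1 \<and> (\<forall>j. j \<noteq> n \<and> \<not> tri j n \<longrightarrow> c j = 0) \<and>
     (\<forall>j. tri j n \<longrightarrow>
        ipk k (\<lambda>x. expoly n c (\<i> * of_real x)) (\<lambda>x. exp (\<i> * of_real (of_int j * x))) = 0)"

definition HO_E :: "real \<Rightarrow> int \<Rightarrow> complex \<Rightarrow> complex" where
  "HO_E k n = expoly n (THE c. E_coeffs k n c)"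

definition HO_normsq :: "real \<Rightarrow> int \<Rightarrow> real" where
  "HO_normsq k n = integral {-pi..pi} (\<lambda>x. (cmod (HO_E k n (\<i> * of_real x)))\<^sup>2 * wk k x)"

end

theory Submission
  imports Defs
begin


definition ac :: "real \<Rightarrow> nat \<Rightarrow> int \<Rightarrow> real" where
  "ac k n p = (if 0 \<le> p \<and> p \<le> int n then real (n choose nat p) * pochhammer (k+1) (nat p)
       * pochhammer k (n - nat p) / pochhammer (k+1) n else 0)"

lemma ac_out: "p < 0 \<or> p > int n \<Longrightarrow> ac k n p = 0"
  by (auto simp: ac_def)

lemma ac_ratio:
  "ac k n (p+1) * ((of_int p + 1) * (k + of_nat n - of_int p - 1)) = ac k n p * ((of_nat n - of_int p) * (k + 1 + of_int p))"
proof -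
  consider "p < -1" | "p = -1" | "0 \<le> p \<and> p < int n" | "p = int n" | "p > int n" by linarith
  then show ?thesis
  proof cases
    case 3
    then obtain m where m: "p = int m" "m < n" by (metis nonneg_int_cases of_nat_less_iff)
    have e1: "nat (int m + 1) = Suc m" by simp
    have c: "real (n choose Suc m) * (real m + 1) = real (n choose m) * (real n - real m)"
    proof -
      have "(n choose Suc m) * Suc m = (n choose m) * (n - m)"
        using binomial_absorb_comp[of n m] binomial_absorption[of m n] by (simp add: mult.commute)
      hence "real ((n choose Suc m) * Suc m) = real ((n choose m) * (n - m))" by simp
      thus ?thesis using m by (simp add: of_nat_diff algebra_simps)
    qed
    have p1: "pochhammer (k+1) (Suc m) = pochhammer (k+1) m * (k+1+real m)"
      by (simp add: pochhammer_Suc)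
    obtain r where r: "n - m = Suc r" using m by (metis Suc_diff_Suc)
    have p2: "pochhammer k (n - m) = pochhammer k (n - Suc m) * (k + real n - real m - 1)"
    proof -
      have "n - Suc m = r" "real r = real n - real m - 1" using r m by linarith+
      thus ?thesis using r by (simp add: pochhammer_Suc)
    qed
    show ?thesis using m
      apply (simp add: ac_def e1 p1 p2)
      using c by simp
  qed (auto simp: ac_def)
qed

lemma sum_telescope_int: "(\<Sum>p\<in>{0..int n}. f (p+1) - f p) = f (int n + 1) - (f 0 :: real)"
proof (induction n)
  case 0 then show ?case by simp
next
  case (Suc n)
  have e: "{0..int (Suc n)} = insert (int n + 1) {0..int n}" by auto
  show ?case unfolding e using Suc by simp
qed

lemma Sq_rec:
  fixes M :: "int \<Rightarrow> real"
  assumes rel: "\<And>j. (of_int j + k + 1) * M (j+1) = (of_int j - k) * M j"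
  shows "(of_int q + 1 - of_nat n) * (of_int q + k + 1) * (\<Sum>p\<in>{0..int n}. ac k n p * M (p - (q+1)))
       + (of_int q + 1) * (k + of_nat n - of_int q) * (\<Sum>p\<in>{0..int n}. ac k n p * M (p - q)) = 0"
proof -
  define c1 where "c1 = (of_int q + 1 - of_nat n) * (of_int q + k + 1)"
  define c0 where "c0 = (of_int q + 1) * (k + of_nat n - of_int q)"
  define C where "C p = ac k n p * ((of_nat n - 1 - of_int q - of_int p) * (of_int p - of_int q - 1 - k) - c1)" for p
  define D where "D p = C p * M (p - q - 1)" for p
  have pt: "c1 * (ac k n p * M (p - (q+1))) + c0 * (ac k n p * M (p - q)) = D (p+1) - D p" for p
  proof -
    define a0 where "a0 = ac k n p"
    define a1 where "a1 = ac k n (p+1)"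
    define M0 where "M0 = M (p - q - 1)"
    define M1 where "M1 = M (p - q)"
    have E1: "a1 * ((of_int p + 1) * (k + of_nat n - of_int p - 1)) = a0 * ((of_nat n - of_int p) * (k + 1 + of_int p))"
      unfolding a0_def a1_def by (rule ac_ratio)
    have E2: "(of_int p - of_int q + k) * M1 = (of_int p - of_int q - 1 - k) * M0"
      using rel[of "p - q - 1"] unfolding M0_def M1_def by (simp add: algebra_simps)
    have D1: "D (p+1) = a1 * ((of_nat n - 1 - of_int q - (of_int p + 1)) * (of_int p + 1 - of_int q - 1 - k) - c1) * M1"
      unfolding D_def C_def a1_def M1_def by (simp add: algebra_simps)
    have D0: "D p = a0 * ((of_nat n - 1 - of_int q - of_int p) * (of_int p - of_int q - 1 - k) - c1) * M0"
      unfolding D_def C_def a0_def M0_def by simp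
    have B1: "(of_nat n - 1 - of_int q - (of_int p + 1)) * (of_int p + 1 - of_int q - 1 - k) - c1
        = (of_int p + 1) * (k + of_nat n - of_int p - 1)"
      unfolding c1_def by (simp add: algebra_simps)
    have B2: "(of_nat n - of_int p) * (k + 1 + of_int p) - c0 = (of_nat n - 1 - of_int q - of_int p) * (of_int p - of_int q + k)"
      unfolding c0_def by (simp add: algebra_simps)
    have "D (p+1) - D p - (c1 * (a0 * M0) + c0 * (a0 * M1))
       = (a1 * ((of_int p + 1) * (k + of_nat n - of_int p - 1)) - a0 * ((of_nat n - of_int p) * (k + 1 + of_int p))) * M1
         + a0 * (of_nat n - 1 - of_int q - of_int p) * ((of_int p - of_int q + k) * M1 - (of_int p - of_int q - 1 - k) * M0)"
      unfolding D1 D0 B1 unfolding c0_def c1_def by (simp add: algebra_simps)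
    also have "\<dots> = 0" using E1 E2 by simp
    finally show ?thesis unfolding a0_def M0_def M1_def by (simp add: algebra_simps)
  qed
  have "c1 * (\<Sum>p\<in>{0..int n}. ac k n p * M (p - (q+1))) + c0 * (\<Sum>p\<in>{0..int n}. ac k n p * M (p - q))
      = (\<Sum>p\<in>{0..int n}. D (p+1) - D p)"
    by (simp add: sum_distrib_left sum.distrib[symmetric] pt)
  also have "\<dots> = D (int n + 1) - D 0" by (rule sum_telescope_int)
  also have "\<dots> = 0" unfolding D_def C_def c1_def by (simp add: ac_def algebra_simps)
  finally show ?thesis unfolding c1_def c0_def .
qed

definition SS :: "real \<Rightarrow> nat \<Rightarrow> (int \<Rightarrow> real) \<Rightarrow> int \<Rightarrow> real" where
  "SS k n M q = (\<Sum>p\<in>{0..int n}. ac k n p * M (p - q))"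

lemma SS_orth:
  fixes M :: "int \<Rightarrow> real"
  assumes rel: "\<And>j. (of_int j + k + 1) * M (j+1) = (of_int j - k) * M j"
    and k: "k \<ge> 0" and q: "0 \<le> q" "q < int n"
  shows "SS k n M q = 0"
proof -
  have R: "(of_int q + 1 - of_nat n) * (of_int q + k + 1) * SS k n M (q+1)
       + (of_int q + 1) * (k + of_nat n - of_int q) * SS k n M q = 0" for q
    unfolding SS_def using Sq_rec[OF rel] .
  have "\<forall>i::nat. i < n \<longrightarrow> SS k n M (int n - 1 - int i) = 0"
  proof
    fix i show "i < n \<longrightarrow> SS k n M (int n - 1 - int i) = 0"
    proof (induction i)
      case 0
      show ?case
      proof
        assume "0 < n"
        have "(real n) * (k + 1) * SS k n M (int n - 1) = 0"
          using R[of "int n - 1"] by (simp add: algebra_simps)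
        moreover have "real n * (k+1) \<noteq> 0" using \<open>0 < n\<close> k by simp
        ultimately show "SS k n M (int n - 1 - int 0) = 0" by simp
      qed
    next
      case (Suc i)
      show ?case
      proof
        assume "Suc i < n"
        hence IH: "SS k n M (int n - 1 - int i) = 0" using Suc by simp
        define q' where "q' = int n - 1 - int (Suc i)"
        have e: "q' + 1 = int n - 1 - int i" unfolding q'_def by simp
        have "SS k n M (q'+1) = 0" unfolding e by (rule IH)
        hence "(of_int q' + 1) * (k + of_nat n - of_int q') * SS k n M q' = 0"
          using R[of q'] by simp
        moreover have "of_int q' + 1 > (0::real)" "k + of_nat n - of_int q' > 0"
          using \<open>Suc i < n\<close> k unfolding q'_def by auto
        ultimately show "SS k n M (int n - 1 - int (Suc i)) = 0" unfolding q'_def by simp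
      qed
    qed
  qed
  moreover have "nat (int n - 1 - q) < n" "int n - 1 - int (nat (int n - 1 - q)) = q" using q by auto
  ultimately show ?thesis by metis
qed

lemma szego_aux:
  fixes P a k C0 C1 X Z :: real
  assumes "P \<noteq> 0" "a \<noteq> 0"
  shows "C0*X*(k*Z)/P + k/a*(C1*Z*(k*X)/P) = X*(k*Z)*(C0*a + k*C1)/(P*a)"
  using assms by (simp add: field_simps)

lemma ac_szego:
  assumes k: "k \<ge> 0"
  shows "ac k (Suc n) p = ac k n (p-1) + k / (real n + k + 1) * ac k n (int n - p)"
proof -
  have P0: "pochhammer (k+1) n > 0" using k by (intro pochhammer_pos) simp
  have al: "real n + k + 1 > 0" using k by simp
  have Psuc: "pochhammer (k+1) (Suc n) = pochhammer (k+1) n * (k + 1 + real n)"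
    by (simp add: pochhammer_Suc)
  consider "p < 0" | "p = 0" | "1 \<le> p \<and> p \<le> int n" | "p = int n + 1" | "p > int n + 1" by linarith
  then show ?thesis
  proof cases
    case 1 then show ?thesis by (simp add: ac_def)
  next
    case 2
    have "ac k (Suc n) p = pochhammer k (Suc n) / pochhammer (k+1) (Suc n)" using 2 by (simp add: ac_def)
    also have "\<dots> = k / (real n + k + 1)"
    proof -
      have a: "pochhammer k (Suc n) = k * pochhammer (k+1) n" by (rule pochhammer_rec)
      have b: "k + 1 + real n \<noteq> 0" "pochhammer (k+1) n \<noteq> 0" using P0 al by auto
      have "k * pochhammer (k+1) n / (pochhammer (k+1) n * (k + 1 + real n)) = k / (k + 1 + real n)"
        using b by (metis mult.commute nonzero_mult_divide_mult_cancel_left)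
      thus ?thesis unfolding Psuc a by (simp add: add_ac)
    qed
    also have "ac k n (int n - p) = 1" using 2 P0 by (simp add: ac_def)
    ultimately show ?thesis using 2 by (simp add: ac_def)
  next
    case 4
    have pe: "p = int (Suc n)" using 4 by simp
    have PS: "pochhammer (k+1) (Suc n) > 0" using k by (intro pochhammer_pos) simp
    have nn: "nat (1 + int n) = Suc n" using nat_int[of "Suc n"] by simp
    have a1: "ac k (Suc n) (int (Suc n)) = 1" using PS by (simp add: ac_def nn)
    have a2: "ac k n (int (Suc n) - 1) = 1" using P0 by (simp add: ac_def)
    have a3: "ac k n (int n - int (Suc n)) = 0" by (simp add: ac_def)
    show ?thesis unfolding pe a1 a2 a3 by simp
  next
    case 5 then show ?thesis by (simp add: ac_def)
  next
    case 3
    define j where "j = nat (p - 1)"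
    have j: "p = int (Suc j)" "Suc j \<le> n" using 3 unfolding j_def by auto
    define r where "r = n - Suc j"
    have nr: "n - j = Suc r" using j unfolding r_def by simp
    have e1: "nat p = Suc j" "nat (p - 1) = j" "nat (int n - p) = r" "n - r = Suc j" "Suc n - Suc j = Suc r"
      using j unfolding r_def by auto
    define X where "X = pochhammer (k+1) j"
    define Y where "Y = pochhammer k (Suc r)"
    define C0 where "C0 = real (n choose j)"
    define C1 where "C1 = real (n choose Suc j)"
    have absorb: "C1 * (real j + 1) = C0 * (real n - real j)"
    proof -
      have "(n choose Suc j) * Suc j = (n choose j) * (n - j)"
        using binomial_absorb_comp[of n j] binomial_absorption[of j n] by (simp add: mult.commute)
      hence "real ((n choose Suc j) * Suc j) = real ((n choose j) * (n - j))" by simp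
      thus ?thesis using j unfolding C0_def C1_def by (simp add: of_nat_diff algebra_simps)
    qed
    have sym: "real (n choose r) = C1"
      unfolding C1_def r_def using j by (simp add: binomial_symmetric[symmetric])
    have h1: "pochhammer (k+1) (Suc j) = X * (k + 1 + real j)" unfolding X_def by (simp add: pochhammer_Suc)
    have h2: "k * pochhammer (k+1) r = Y" unfolding Y_def by (simp add: pochhammer_rec)
    have h3: "pochhammer k (Suc j) = k * X" unfolding X_def by (simp add: pochhammer_rec)
    have L: "ac k (Suc n) p = (C0 + C1) * (X * (k + 1 + real j)) * Y / (pochhammer (k+1) n * (k + 1 + real n))"
    proof -
      have e2: "nat (1 + int j) = Suc j" using nat_int[of "Suc j"] by simp
      show ?thesis using j unfolding ac_def by (simp add: e1 e2 nr Psuc h1 C0_def C1_def Y_def)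
    qed
    have R1: "ac k n (p-1) = C0 * X * Y / pochhammer (k+1) n"
      using j unfolding ac_def by (simp add: e1 nr C0_def X_def Y_def)
    have R2: "ac k n (int n - p) = C1 * pochhammer (k+1) r * (k * X) / pochhammer (k+1) n"
    proof -
      have e3: "nat (int n - (1 + int j)) = r" using j unfolding r_def by auto
      show ?thesis using j unfolding ac_def by (simp add: e1 e3 sym h3)
    qed
    have "ac k n (p-1) + k / (real n + k + 1) * ac k n (int n - p)
        = X * Y * (C0 * (real n + k + 1) + k * C1) / (pochhammer (k+1) n * (real n + k + 1))"
      unfolding R1 R2 h2[symmetric] using szego_aux[of "pochhammer (k+1) n" "real n + k + 1"] P0 al by simp
    also have "C0 * (real n + k + 1) + k * C1 = (C0 + C1) * (k + 1 + real j)"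
      using absorb by (simp add: algebra_simps)
    finally show ?thesis unfolding L by (simp add: algebra_simps)
  qed
qed

lemma ac_ext:
  assumes "finite P" "{0..int n} \<subseteq> P"
  shows "(\<Sum>p\<in>P. ac k n p * f p) = (\<Sum>p\<in>{0..int n}. ac k n p * f p)"
  using assms by (intro sum.mono_neutral_right) (auto simp: ac_def)

lemma SS_szego:
  assumes k: "k \<ge> 0" and sym: "\<And>j. M (-j) = M j"
  shows "SS k (Suc n) M q = SS k n M (q-1) + k / (real n + k + 1) * SS k n M (int n - q)"
proof -
  have "SS k (Suc n) M q = (\<Sum>p\<in>{0..int (Suc n)}. ac k n (p-1) * M (p - q))
      + k / (real n + k + 1) * (\<Sum>p\<in>{0..int (Suc n)}. ac k n (int n - p) * M (p - q))"
    unfolding SS_def ac_szego[OF k] by (simp add: sum.distrib sum_distrib_left algebra_simps)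
  also have "(\<Sum>p\<in>{0..int (Suc n)}. ac k n (p-1) * M (p - q)) = (\<Sum>p\<in>{-1..int n}. ac k n p * M (p - (q-1)))"
    by (rule sum.reindex_bij_witness[where i="\<lambda>p. p+1" and j="\<lambda>p. p-1"]) (auto simp: algebra_simps)
  also have "\<dots> = SS k n M (q-1)" unfolding SS_def by (rule ac_ext) auto
  also have "(\<Sum>p\<in>{0..int (Suc n)}. ac k n (int n - p) * M (p - q)) = (\<Sum>p\<in>{-1..int n}. ac k n p * M (p - (int n - q)))"
  proof (rule sum.reindex_bij_witness[where i="\<lambda>p. int n - p" and j="\<lambda>p. int n - p"])
    fix a assume "a \<in> {0..int (Suc n)}"
    have "M (int n - a - (int n - q)) = M (- (a - q))" by (simp add: algebra_simps)
    also have "\<dots> = M (a - q)" by (rule sym)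
    finally show "ac k n (int n - a) * M (int n - a - (int n - q)) = ac k n (int n - a) * M (a - q)" by simp
  qed auto
  also have "\<dots> = SS k n M (int n - q)" unfolding SS_def by (rule ac_ext) auto
  finally show ?thesis .
qed

lemma one_minus_sq_aux: "(a::real) \<noteq> 0 \<Longrightarrow> 1 - (k/a)^2 = (a^2 - k^2)/a^2"
  by (simp add: field_simps)

lemma SS_diag:
  fixes M :: "int \<Rightarrow> real"
  assumes rel: "\<And>j. (of_int j + k + 1) * M (j+1) = (of_int j - k) * M j"
    and sym: "\<And>j. M (-j) = M j" and k: "k \<ge> 0"
  shows "SS k n M (int n) = M 0 * (\<Prod>j<n. (real j + 1) * (real j + 2*k + 1) / (real j + k + 1)^2)"
proof (induction n)
  case 0
  then show ?case by (simp add: SS_def ac_def)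
next
  case (Suc n)
  define \<alpha> where "\<alpha> = k / (real n + k + 1)"
  have A: "SS k (Suc n) M (int (Suc n)) = SS k n M (int n) + \<alpha> * SS k n M (-1)"
    using SS_szego[of k M n "int (Suc n)", OF k sym] unfolding \<alpha>_def by simp
  have "0 = SS k (Suc n) M 0" using SS_orth[OF rel k, of 0 "Suc n"] by simp
  also have "\<dots> = SS k n M (-1) + \<alpha> * SS k n M (int n)"
    using SS_szego[of k M n 0, OF k sym] unfolding \<alpha>_def by simp
  finally have B: "SS k n M (-1) = - \<alpha> * SS k n M (int n)" by simp
  have al: "real n + k + 1 > 0" using k by simp
  have C: "1 - \<alpha>^2 = (real n + 1) * (real n + 2*k + 1) / (real n + k + 1)^2"
  proof -
    have "1 - \<alpha>^2 = ((real n + k + 1)^2 - k^2) / (real n + k + 1)^2"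
      unfolding \<alpha>_def using al by (intro one_minus_sq_aux) simp
    also have "(real n + k + 1)^2 - k^2 = (real n + 1) * (real n + 2*k + 1)"
      by (simp add: power2_eq_square algebra_simps)
    finally show ?thesis .
  qed
  have "SS k (Suc n) M (int (Suc n)) = SS k n M (int n) * (1 - \<alpha>^2)"
    unfolding A B by (simp add: algebra_simps power2_eq_square)
  also have "\<dots> = SS k n M (int n) * ((real n + 1) * (real n + 2*k + 1) / (real n + k + 1)^2)"
    unfolding C ..
  finally show ?case unfolding Suc by (simp add: mult.assoc)
qed



lemma wk_cont: assumes "k \<ge> 0" shows "continuous_on S (wk k)"
proof (cases "k = 0")
  case True
  then have "wk k = (\<lambda>x. 1)" by (auto simp: wk_def)
  then show ?thesis by simp
next
  case False
  then have e: "wk k = (\<lambda>x. \<bar>sin x\<bar> powr (2*k))" by (auto simp: wk_def fun_eq_iff)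
  have "continuous_on S (\<lambda>x. \<bar>sin x\<bar> powr (2*k))"
    using False assms by (intro continuous_on_powr' continuous_intros) auto
  then show ?thesis unfolding e .
qed

lemma wk_even: "wk k (-x) = wk k x" by (simp add: wk_def)

lemma wk_nonneg: "wk k x \<ge> 0" by (simp add: wk_def)

lemma wk_open: assumes "0 < x" "x < pi" shows "wk k x = sin x powr (2*k)"
proof -
  have "sin x > 0" using assms by (simp add: sin_gt_zero)
  then show ?thesis by (auto simp: wk_def)
qed

definition Cm :: "real \<Rightarrow> real \<Rightarrow> real" where
  "Cm k m = integral {0..pi} (\<lambda>x. wk k x * cos (m * x))"

lemma Cm_hi: assumes "k \<ge> 0" shows "((\<lambda>x. wk k x * cos (m * x)) has_integral Cm k m) {0..pi}"
  unfolding Cm_def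
  by (intro integrable_integral integrable_continuous_interval continuous_intros wk_cont assms)

lemma trig_aux:
  fixes k m x :: real
  shows "((2*k+1) * (cos x)^2 - (sin x)^2) * cos (m*x) - m * sin x * cos x * sin (m*x)
       = (4*k*cos (m*x) + (2*k+2+m) * cos ((m+2)*x) + (2*k+2-m) * cos ((m-2)*x)) / 4"
proof -
  have a: "cos ((m+2)*x) = cos (m*x) * cos (2*x) - sin (m*x) * sin (2*x)"
    by (simp add: distrib_right cos_add)
  have b: "cos ((m-2)*x) = cos (m*x) * cos (2*x) + sin (m*x) * sin (2*x)"
    by (simp add: left_diff_distrib cos_diff)
  have c: "cos (2*x) = (cos x)^2 - (sin x)^2" by (rule cos_double)
  have d: "sin (2*x) = 2 * sin x * cos x" by (rule sin_double)
  have e: "(sin x)^2 = 1 - (cos x)^2" by (simp add: sin_squared_eq)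
  show ?thesis unfolding a b c d e by (simp add: algebra_simps power2_eq_square)
qed

lemma Cm_rec:
  assumes k: "k \<ge> 0"
  shows "4*k * Cm k m + (2*k+2+m) * Cm k (m+2) + (2*k+2-m) * Cm k (m-2) = 0"
proof -
  define F where "F x = sin x powr (2*k+1) * cos x * cos (m*x)" for x
  define f' where "f' x = wk k x * ((4*k*cos (m*x) + (2*k+2+m) * cos ((m+2)*x) + (2*k+2-m) * cos ((m-2)*x)) / 4)" for x
  have der: "(F has_vector_derivative f' x) (at x)" if x: "x \<in> {0<..<pi}" for x
  proof -
    have s: "sin x > 0" using x by (simp add: sin_gt_zero)
    have D1: "((\<lambda>x. sin x powr (2*k+1)) has_real_derivative ((2*k+1) * sin x powr (2*k) * cos x)) (at x)"
      using DERIV_fun_powr[OF DERIV_sin s, of "2*k+1"] by simp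
    have D2: "((\<lambda>x. cos (m*x)) has_real_derivative (- sin (m*x) * m)) (at x)"
      by (auto intro!: derivative_eq_intros)
    have D: "(F has_real_derivative
        ((2*k+1) * sin x powr (2*k) * cos x * cos x + (- sin x) * sin x powr (2*k+1)) * cos (m*x)
          + (- sin (m*x) * m) * (sin x powr (2*k+1) * cos x)) (at x)"
      unfolding F_def by (intro DERIV_mult D1 D2 DERIV_cos)
    have p: "sin x powr (2*k+1) = sin x powr (2*k) * sin x" using s by (simp add: powr_add)
    have w: "wk k x = sin x powr (2*k)" using x by (intro wk_open) auto
    have "((2*k+1) * sin x powr (2*k) * cos x * cos x + (- sin x) * sin x powr (2*k+1)) * cos (m*x)
          + (- sin (m*x) * m) * (sin x powr (2*k+1) * cos x)
        = sin x powr (2*k) * (((2*k+1) * (cos x)^2 - (sin x)^2) * cos (m*x) - m * sin x * cos x * sin (m*x))"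
      unfolding p by (simp add: algebra_simps power2_eq_square)
    also have "\<dots> = f' x" unfolding trig_aux f'_def w ..
    finally show ?thesis using D by (simp add: has_real_derivative_iff_has_vector_derivative)
  qed
  have cont: "continuous_on {0..pi} F"
  proof -
    have "continuous_on {0..pi} (\<lambda>x. sin x powr (2*k+1))"
      by (rule continuous_on_powr') (use k in \<open>auto intro: continuous_intros simp: sin_ge_zero\<close>)
    then show ?thesis unfolding F_def by (intro continuous_on_mult) (auto intro!: continuous_intros)
  qed
  have "(f' has_integral (F pi - F 0)) {0..pi}"
    by (rule fundamental_theorem_of_calculus_interior[OF _ cont der]) auto
  moreover have "F pi - F 0 = 0" unfolding F_def by simp
  ultimately have I0: "(f' has_integral 0) {0..pi}" by simp
  have "(f' has_integral (k * Cm k m + (2*k+2+m)/4 * Cm k (m+2) + (2*k+2-m)/4 * Cm k (m-2))) {0..pi}"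
  proof -
    have e: "f' = (\<lambda>x. k * (wk k x * cos (m*x)) + (2*k+2+m)/4 * (wk k x * cos ((m+2)*x))
                 + (2*k+2-m)/4 * (wk k x * cos ((m-2)*x)))"
      unfolding f'_def by (auto simp: fun_eq_iff field_simps)
    show ?thesis unfolding e
      by (intro has_integral_add has_integral_mult_right Cm_hi k)
  qed
  then have "k * Cm k m + (2*k+2+m)/4 * Cm k (m+2) + (2*k+2-m)/4 * Cm k (m-2) = 0"
    using I0 by (rule has_integral_unique)
  then show ?thesis by (simp add: field_simps)
qed



definition Mo :: "real \<Rightarrow> int \<Rightarrow> real" where
  "Mo k q = Cm k (2 * of_int q)"

lemma Mo_sym: "Mo k (-q) = Mo k q"
  unfolding Mo_def Cm_def by simp

lemma Mo_rec3:
  assumes k: "k \<ge> 0"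
  shows "2*k * Mo k q + (k+1+ of_int q) * Mo k (q+1) + (k+1-of_int q) * Mo k (q-1) = 0"
proof -
  have "4*k * Cm k (2* of_int q) + (2*k+2+2* of_int q) * Cm k (2* of_int q+2) + (2*k+2-2* of_int q) * Cm k (2* of_int q-2) = 0"
    by (rule Cm_rec[OF k])
  moreover have "Cm k (2* of_int q+2) = Mo k (q+1)" "Cm k (2* of_int q-2) = Mo k (q-1)" "Cm k (2* of_int q) = Mo k q"
    unfolding Mo_def by (simp_all add: algebra_simps)
  ultimately show ?thesis by (simp add: algebra_simps)
qed

lemma Mo_rel_nat:
  assumes k: "k \<ge> 0"
  shows "(real i + k + 1) * Mo k (int i + 1) = (real i - k) * Mo k (int i)"
proof (induction i)
  case 0
  have "2*k * Mo k 0 + (k+1) * Mo k 1 + (k+1) * Mo k (-1) = 0"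
    using Mo_rec3[OF k, of 0] by simp
  moreover have "Mo k (-1) = Mo k 1" using Mo_sym[of k 1] by simp
  ultimately show ?case by (simp add: algebra_simps)
next
  case (Suc i)
  have R: "2*k * Mo k (int i + 1) + (k+1+(real i + 1)) * Mo k (int i + 2) + (k+1-(real i + 1)) * Mo k (int i) = 0"
    using Mo_rec3[OF k, of "int i + 1"] by (simp add: add.assoc)
  have "(real (Suc i) + k + 1) * Mo k (int (Suc i) + 1) - (real (Suc i) - k) * Mo k (int (Suc i))
     = (2*k * Mo k (int i + 1) + (k+1+(real i + 1)) * Mo k (int i + 2) + (k+1-(real i + 1)) * Mo k (int i))
       - ((real i + k + 1) * Mo k (int i + 1) - (real i - k) * Mo k (int i))"
    by (simp add: algebra_simps)
  also have "\<dots> = 0" using R Suc by simp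
  finally show ?case by simp
qed

lemma Mo_rel:
  assumes k: "k \<ge> 0"
  shows "(of_int j + k + 1) * Mo k (j+1) = (of_int j - k) * Mo k j"
proof (cases "j \<ge> 0")
  case True
  then obtain i where "j = int i" by (metis nonneg_int_cases)
  then show ?thesis using Mo_rel_nat[OF k, of i] by simp
next
  case False
  define s where "s = nat (- j - 1)"
  have s: "j = - int s - 1" using False unfolding s_def by simp
  have a: "Mo k (j+1) = Mo k (int s)" using s Mo_sym[of k "int s"] by simp
  have js: "j = - (int s + 1)" using s by simp
  have b: "Mo k j = Mo k (int s + 1)" unfolding js by (rule Mo_sym)
  have jr: "real_of_int j = - real s - 1" using s by simp
  have "(real s + k + 1) * Mo k (int s + 1) = (real s - k) * Mo k (int s)" by (rule Mo_rel_nat[OF k])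
  then show ?thesis unfolding a b jr by (simp add: algebra_simps)
qed

lemma beta_point:
  fixes k x :: real
  assumes x: "0 < x" "x < pi"
  shows "((1 - cos x)/2) powr (k + 1/2 - 1) * (1 - (1 - cos x)/2) powr (k + 1/2 - 1) * (sin x / 2)
        = sin x powr (2*k) / 2 powr (2*k)"
proof -
  have s: "sin x > 0" using x by (simp add: sin_gt_zero)
  define y where "y = sin x / 2"
  have y: "y > 0" using s unfolding y_def by simp
  have u: "(1 - cos x)/2 \<ge> 0" "1 - (1 - cos x)/2 \<ge> 0" using cos_le_one[of x] cos_ge_minus_one[of x] by auto
  have "((1 - cos x)/2) * (1 - (1 - cos x)/2) = (1 - (cos x)^2)/4" by (simp add: field_simps power2_eq_square)
  also have "\<dots> = y^2" unfolding y_def sin_squared_eq[symmetric] by (simp add: power_divide)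
  finally have uv: "((1 - cos x)/2) * (1 - (1 - cos x)/2) = y^2" .
  have "((1 - cos x)/2) powr (k + 1/2 - 1) * (1 - (1 - cos x)/2) powr (k + 1/2 - 1)
      = (y^2) powr (k + 1/2 - 1)" unfolding uv[symmetric] by (rule powr_mult[symmetric])
  also have "y^2 = y powr 2" using y by (simp add: powr_realpow)
  also have "(y powr 2) powr (k + 1/2 - 1) = y powr (2*k - 1)" by (simp add: powr_powr algebra_simps)
  finally have "((1 - cos x)/2) powr (k + 1/2 - 1) * (1 - (1 - cos x)/2) powr (k + 1/2 - 1) * (sin x / 2)
      = y powr (2*k - 1) * y powr 1" using y unfolding y_def by simp
  also have "\<dots> = y powr (2*k)" by (simp only: powr_add[symmetric]) simp
  also have "\<dots> = sin x powr (2*k) / 2 powr (2*k)" unfolding y_def using s by (simp add: powr_divide)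
  finally show ?thesis .
qed

lemma Cm0_beta:
  assumes k: "k \<ge> 0"
  shows "Cm k 0 = 2 powr (2*k) * Beta (k + 1/2) (k + 1/2)"
proof -
  define a where "a = k + 1/2"
  have a: "a > 0" using k unfolding a_def by simp
  define f where "f t = t powr (a - 1) * (1 - t) powr (a - 1)" for t :: real
  define g where "g x = (1 - cos x) / 2" for x :: real
  have gg: "g 0 = 0" "g pi = 1" unfolding g_def by simp_all
  have int1: "set_integrable lborel {0..1} f" unfolding f_def by (rule integrable_Beta[OF a a])
  have derivg: "(g has_real_derivative (sin x / 2)) (at x)" for x
    unfolding g_def by (auto intro!: derivative_eq_intros)
  have contg': "continuous_on {0..pi} (\<lambda>x. sin x / 2)" by (intro continuous_intros) auto
  have nonneg: "sin x / 2 \<ge> 0" if "x \<in> {0..pi}" for x using that by (simp add: sin_ge_zero)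
  note sub = integral_substitution[of g 0 pi f "\<lambda>x. sin x / 2", unfolded gg, OF int1 derivg contg' nonneg]
  have si: "set_integrable lborel {0..pi} (\<lambda>x. f (g x) * (sin x / 2))" using sub(1) by simp
  have "Beta a a = integral {0..1} f"
    using has_integral_Beta_real[OF a a] unfolding f_def by (simp add: integral_unique)
  also have "\<dots> = (LINT x:{0..1}|lborel. f x)" using set_borel_integral_eq_integral(2)[OF int1] by simp
  also have "\<dots> = (LBINT x. f x * indicator {0..1} x)" unfolding set_lebesgue_integral_def by (simp add: mult.commute)
  also have "\<dots> = (LBINT x. f (g x) * (sin x / 2) * indicator {0..pi} x)" using sub(2) by simp
  also have "\<dots> = (LINT x:{0..pi}|lborel. f (g x) * (sin x / 2))" unfolding set_lebesgue_integral_def by (simp add: mult.commute)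
  also have "\<dots> = integral {0..pi} (\<lambda>x. f (g x) * (sin x / 2))" using set_borel_integral_eq_integral(2)[OF si] by simp
  also have "\<dots> = integral {0..pi} (\<lambda>x. wk k x / 2 powr (2*k))"
  proof (rule integral_spike[of "{0, pi}"])
    fix x assume "x \<in> {0..pi} - {0, pi}"
    then have x: "0 < x" "x < pi" by auto
    show "wk k x / 2 powr (2*k) = f (g x) * (sin x / 2)"
      unfolding f_def g_def a_def wk_open[OF x] using beta_point[OF x, of k] by simp
  qed auto
  also have "\<dots> = Cm k 0 / 2 powr (2*k)" unfolding Cm_def by simp
  finally show ?thesis unfolding a_def by simp
qed

lemma dup_real:
  fixes x :: real
  assumes x: "x > 0"
  shows "Gamma x * Gamma (x + 1/2) = 2 powr (1 - 2*x) * sqrt pi * Gamma (2*x)"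
proof -
  have n1: "complex_of_real x \<notin> \<int>\<^sub>\<le>\<^sub>0" using x by (auto simp: of_real_in_nonpos_Ints_iff)
  have n2: "complex_of_real x + 1/2 \<notin> \<int>\<^sub>\<le>\<^sub>0"
  proof -
    have e: "complex_of_real x + 1/2 = complex_of_real (x + 1/2)" by simp
    have "x + 1/2 \<notin> \<int>\<^sub>\<le>\<^sub>0" using x by auto
    then show ?thesis unfolding e of_real_in_nonpos_Ints_iff .
  qed
  have D: "Gamma (complex_of_real x) * Gamma (complex_of_real x + 1/2) =
             exp ((1 - 2 * complex_of_real x) * of_real (ln 2)) * of_real (sqrt pi) * Gamma (2 * complex_of_real x)"
    by (rule Gamma_legendre_duplication[OF n1 n2])
  have e1: "Gamma (complex_of_real x) = of_real (Gamma x)" by (rule Gamma_complex_of_real)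
  have e2: "Gamma (complex_of_real x + 1/2) = of_real (Gamma (x + 1/2))"
    using Gamma_complex_of_real[of "x + 1/2"] by simp
  have e3: "Gamma (2 * complex_of_real x) = of_real (Gamma (2*x))"
    using Gamma_complex_of_real[of "2*x"] by simp
  have e4: "exp ((1 - 2 * complex_of_real x) * of_real (ln 2)) = of_real (2 powr (1 - 2*x))"
  proof -
    have a: "(1 - 2 * complex_of_real x) * of_real (ln 2) = of_real ((1 - 2*x) * ln 2)" by simp
    show ?thesis unfolding a exp_of_real by (simp add: powr_def)
  qed
  have "complex_of_real (Gamma x * Gamma (x + 1/2)) = complex_of_real (2 powr (1 - 2*x) * sqrt pi * Gamma (2*x))"
    using D unfolding e1 e2 e3 e4 by simp
  then show ?thesis by (simp only: of_real_eq_iff)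
qed

lemma Mo0:
  assumes k: "k \<ge> 0"
  shows "Mo k 0 = pi * Gamma (2*k+1) / (2 powr (2*k) * Gamma (k+1)^2)"
proof -
  define G where "G = Gamma (k + 1/2)"
  define H where "H = Gamma (k + 1)"
  define K where "K = Gamma (2*k + 1)"
  define t where "t = (2::real) powr (2*k)"
  have H: "H > 0" unfolding H_def using k by simp
  have K: "K > 0" unfolding K_def using k by simp
  have t: "t > 0" unfolding t_def by simp
  have "G * H = 2 powr (1 - 2*(k + 1/2)) * sqrt pi * K"
    using dup_real[of "k + 1/2"] k unfolding G_def H_def K_def by (simp add: algebra_simps)
  also have "2 powr (1 - 2*(k + 1/2)) = 1 / t" unfolding t_def by (simp add: powr_minus divide_simps)
  finally have GH: "G = sqrt pi * K / (t * H)" using H t by (simp add: field_simps)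
  have "Mo k 0 = t * (G * G / K)"
    unfolding Mo_def t_def G_def K_def using Cm0_beta[OF k] by (simp add: Beta_def algebra_simps)
  also have "\<dots> = pi * K / (t * H^2)" unfolding GH using H K t
    by (simp add: field_simps power2_eq_square)
  finally show ?thesis unfolding t_def H_def K_def .
qed



definition mu :: "real \<Rightarrow> int \<Rightarrow> complex" where
  "mu k m = integral {-pi..pi} (\<lambda>x. exp (\<i> * complex_of_real (real_of_int m * x)) * complex_of_real (wk k x))"

lemma cont_wkc: "k \<ge> 0 \<Longrightarrow> continuous_on S (\<lambda>x. complex_of_real (wk k x))"
  using wk_cont[of k S] by simp

lemma exp_pair: "exp (\<i> * complex_of_real t) + exp (\<i> * complex_of_real (- t)) = complex_of_real (2 * cos t)"
proof -
  have a: "exp (\<i> * complex_of_real t) = cis t" by (rule cis_conv_exp[symmetric])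
  have b: "exp (\<i> * complex_of_real (- t)) = cis (- t)" by (rule cis_conv_exp[symmetric])
  show ?thesis unfolding a b by (simp add: complex_eq_iff)
qed

lemma mu_even:
  assumes k: "k \<ge> 0"
  shows "mu k (2*q) = complex_of_real (2 * Mo k q)"
proof -
  define h where "h x = exp (\<i> * complex_of_real (real_of_int (2*q) * x)) * complex_of_real (wk k x)" for x
  have hc: "continuous_on S h" for S unfolding h_def by (intro continuous_intros cont_wkc k)
  have hi: "h integrable_on {a..b}" for a b by (rule integrable_continuous_interval[OF hc])
  have hmi: "(\<lambda>x. h (-x)) integrable_on {a..b}" for a b
    by (rule integrable_continuous_interval) (intro continuous_on_compose2[OF hc] continuous_intros, auto)
  have "mu k (2*q) = integral {-pi..0} h + integral {0..pi} h"
    unfolding mu_def h_def[symmetric] by (rule Henstock_Kurzweil_Integration.integral_combine[symmetric]) (auto intro: hi)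
  also have "integral {-pi..0} h = integral {0..pi} (\<lambda>x. h (-x))"
    using Henstock_Kurzweil_Integration.integral_reflect_real[of pi 0 "\<lambda>x. h (-x)"] by simp
  also have "integral {0..pi} (\<lambda>x. h (-x)) + integral {0..pi} h = integral {0..pi} (\<lambda>x. h x + h (-x))"
    using integral_add[OF hi hmi, of 0 pi] by (simp add: add.commute)
  also have "\<dots> = integral {0..pi} (\<lambda>x. complex_of_real (2 * (wk k x * cos (2 * of_int q * x))))"
  proof (rule integral_cong)
    fix x
    have "h x + h (-x) = (exp (\<i> * complex_of_real (2 * of_int q * x)) + exp (\<i> * complex_of_real (- (2 * of_int q * x)))) * complex_of_real (wk k x)"
      unfolding h_def by (simp add: wk_even algebra_simps)
    also have "\<dots> = complex_of_real (2 * (wk k x * cos (2 * of_int q * x)))"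
      unfolding exp_pair by simp
    finally show "h x + h (-x) = complex_of_real (2 * (wk k x * cos (2 * of_int q * x)))" .
  qed
  also have "\<dots> = complex_of_real (2 * Mo k q)"
  proof -
    have "((\<lambda>x. 2 * (wk k x * cos (2 * of_int q * x))) has_integral (2 * Mo k q)) {0..pi}"
      unfolding Mo_def by (intro has_integral_mult_right Cm_hi k)
    from has_integral_of_real[OF this] show ?thesis by (rule integral_unique)
  qed
  finally show ?thesis .
qed

lemma expoly_cont: "continuous_on S (\<lambda>x. expoly N c (\<i> * complex_of_real x))"
  unfolding expoly_def by (intro continuous_intros)

lemma ip_expoly:
  assumes k: "k \<ge> 0"
  shows "ipk k (\<lambda>x. expoly N c (\<i> * complex_of_real x)) (\<lambda>x. exp (\<i> * complex_of_real (real_of_int j * x)))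
       = (\<Sum>l\<in>{-\<bar>N\<bar>..\<bar>N\<bar>}. c l * mu k (l - j))"
proof -
  have pt: "expoly N c (\<i> * complex_of_real x) * cnj (exp (\<i> * complex_of_real (real_of_int j * x))) * complex_of_real (wk k x)
     = (\<Sum>l\<in>{-\<bar>N\<bar>..\<bar>N\<bar>}. c l * (exp (\<i> * complex_of_real (real_of_int (l - j) * x)) * complex_of_real (wk k x)))" for x
  proof -
    have e: "exp (of_int l * (\<i> * complex_of_real x)) * cnj (exp (\<i> * complex_of_real (real_of_int j * x)))
        = exp (\<i> * complex_of_real (real_of_int (l - j) * x))" for l
    proof -
      have "cnj (exp (\<i> * complex_of_real (real_of_int j * x))) = exp (- (\<i> * complex_of_real (real_of_int j * x)))"
        by (simp add: exp_cnj)
      then show ?thesis by (simp add: exp_add[symmetric] algebra_simps)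
    qed
    show ?thesis unfolding expoly_def sum_distrib_right
    proof (rule sum.cong[OF refl])
      fix l
      have "c l * exp (of_int l * (\<i> * complex_of_real x)) * cnj (exp (\<i> * complex_of_real (real_of_int j * x))) * complex_of_real (wk k x)
          = c l * ((exp (of_int l * (\<i> * complex_of_real x)) * cnj (exp (\<i> * complex_of_real (real_of_int j * x)))) * complex_of_real (wk k x))"
        by (simp only: mult.assoc)
      then show "c l * exp (of_int l * (\<i> * complex_of_real x)) * cnj (exp (\<i> * complex_of_real (real_of_int j * x))) * complex_of_real (wk k x)
          = c l * (exp (\<i> * complex_of_real (real_of_int (l - j) * x)) * complex_of_real (wk k x))"
        unfolding e .
    qed
  qed
  have int: "(\<lambda>x. c l * (exp (\<i> * complex_of_real (real_of_int (l - j) * x)) * complex_of_real (wk k x))) integrable_on {-pi..pi}" for l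
    by (intro integrable_continuous_interval continuous_intros cont_wkc k)
  show ?thesis unfolding ipk_def pt
    apply (subst integral_sum)
      apply simp
     apply (rule int)
    apply (simp add: mu_def)
    done
qed

lemma normsq_expoly:
  assumes k: "k \<ge> 0"
  shows "complex_of_real (integral {-pi..pi} (\<lambda>x. (cmod (expoly N c (\<i> * complex_of_real x)))^2 * wk k x))
       = (\<Sum>j\<in>{-\<bar>N\<bar>..\<bar>N\<bar>}. cnj (c j) * ipk k (\<lambda>x. expoly N c (\<i> * complex_of_real x)) (\<lambda>x. exp (\<i> * complex_of_real (real_of_int j * x))))"
proof -
  define F where "F x = expoly N c (\<i> * complex_of_real x)" for x
  have Fc: "continuous_on S F" for S unfolding F_def by (rule expoly_cont)
  have ri: "(\<lambda>x. (cmod (F x))^2 * wk k x) integrable_on {-pi..pi}"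
    by (intro integrable_continuous_interval continuous_intros wk_cont k Fc)
  have "complex_of_real (integral {-pi..pi} (\<lambda>x. (cmod (F x))^2 * wk k x))
      = integral {-pi..pi} (\<lambda>x. complex_of_real ((cmod (F x))^2 * wk k x))"
    by (rule sym, rule integral_unique, rule has_integral_of_real, rule integrable_integral, rule ri)
  also have "\<dots> = integral {-pi..pi} (\<lambda>x. \<Sum>j\<in>{-\<bar>N\<bar>..\<bar>N\<bar>}. cnj (c j) * (F x * cnj (exp (\<i> * complex_of_real (real_of_int j * x))) * complex_of_real (wk k x)))"
  proof (rule integral_cong)
    fix x
    have ee: "exp (of_int j * (\<i> * complex_of_real x)) = exp (\<i> * complex_of_real (real_of_int j * x))" for j
      by (simp add: mult.commute mult.left_commute)
    have cF: "cnj (F x) = (\<Sum>j\<in>{-\<bar>N\<bar>..\<bar>N\<bar>}. cnj (c j) * cnj (exp (\<i> * complex_of_real (real_of_int j * x))))"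
      unfolding F_def expoly_def ee by simp
    have "complex_of_real ((cmod (F x))^2 * wk k x) = F x * cnj (F x) * complex_of_real (wk k x)"
      unfolding of_real_mult complex_norm_square ..
    also have "\<dots> = (\<Sum>j\<in>{-\<bar>N\<bar>..\<bar>N\<bar>}. cnj (c j) * (F x * cnj (exp (\<i> * complex_of_real (real_of_int j * x))) * complex_of_real (wk k x)))"
      unfolding cF sum_distrib_left sum_distrib_right by (simp add: algebra_simps)
    finally show "complex_of_real ((cmod (F x))^2 * wk k x) = \<dots>" .
  qed
  also have "\<dots> = (\<Sum>j\<in>{-\<bar>N\<bar>..\<bar>N\<bar>}. cnj (c j) * ipk k F (\<lambda>x. exp (\<i> * complex_of_real (real_of_int j * x))))"
    unfolding ipk_def
    by (subst integral_sum) (auto intro!: integrable_continuous_interval continuous_intros cont_wkc k Fc)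
  finally show ?thesis unfolding F_def .
qed



lemma tri_a1: "even (j + int n + 1) \<Longrightarrow> 0 \<le> (j + int n - 1) div 2 \<Longrightarrow> (j + int n - 1) div 2 \<le> int n \<Longrightarrow> j \<noteq> int n + 1 \<Longrightarrow> tri j (int n + 1)"
  unfolding tri_def abs_if by presburger
lemma tri_a2: "tri j (int n + 1) \<Longrightarrow> even (j + int n + 1) \<and> 0 \<le> (j + int n - 1) div 2 \<and> (j + int n - 1) div 2 < int n"
  unfolding tri_def abs_if by presburger
lemma tri_a3: "even (j + int n) \<Longrightarrow> 0 \<le> (int n - j) div 2 \<Longrightarrow> (int n - j) div 2 \<le> int n \<Longrightarrow> j \<noteq> - int n \<Longrightarrow> tri j (- int n)"
  unfolding tri_def abs_if by presburger
lemma tri_a4: "tri j (- int n) \<Longrightarrow> even (j + int n) \<and> 0 \<le> (int n - j) div 2 \<and> (int n - j) div 2 < int n"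
  unfolding tri_def abs_if by presburger
lemma tri_a5: "tri j N \<Longrightarrow> even (j - N)"
  unfolding tri_def abs_if by presburger
lemma tri_a6: "tri j N \<Longrightarrow> j \<in> {-\<bar>N\<bar>..\<bar>N\<bar>}"
  unfolding tri_def abs_if atLeastAtMost_iff by presburger

lemma Mo_zero_k0: "Mo 0 r = (if r = 0 then pi else 0)"
proof -
  have pos: "Mo 0 (int i + 1) = 0" for i
  proof (induction i)
    case 0
    show ?case using Mo_rel[of 0 0] by simp
  next
    case (Suc i)
    have "(real (Suc i) + 1) * Mo 0 (int (Suc i) + 1) = real (Suc i) * Mo 0 (int (Suc i))"
      using Mo_rel[of 0 "int (Suc i)"] by simp
    moreover have "Mo 0 (int (Suc i)) = 0" using Suc by (simp add: add.commute)
    ultimately have "(real (Suc i) + 1) * Mo 0 (int (Suc i) + 1) = 0" by simp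
    moreover have "real (Suc i) + 1 \<noteq> 0" by simp
    ultimately show ?case by simp
  qed
  show ?thesis
  proof (cases "r = 0")
    case True
    then show ?thesis using Mo0[of 0] by simp
  next
    case False
    show ?thesis
    proof (cases "r > 0")
      case True
      then have "r = int (nat (r - 1)) + 1" by simp
      then show ?thesis using pos[of "nat (r - 1)"] False by metis
    next
      case f2: False
      then have "- r = int (nat (- r - 1)) + 1" using False by simp
      then have "Mo 0 (- r) = 0" using pos[of "nat (- r - 1)"] by metis
      then show ?thesis using Mo_sym[of 0 r] False by simp
    qed
  qed
qed

lemma wk_pos: assumes "sin x \<noteq> 0" shows "wk k x > 0"
  using assms by (auto simp: wk_def)

lemma E_unique:
  assumes k: "k \<ge> 0" and Ec: "E_coeffs k N c" and Ec': "E_coeffs k N c'"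
  shows "c = c'"
proof -
  define R where "R = {-\<bar>N\<bar>..\<bar>N\<bar>}"
  define d where "d j = c j - c' j" for j
  define e where "e j = (\<lambda>x::real. exp (\<i> * complex_of_real (real_of_int j * x)))" for j
  define F where "F x = expoly N d (\<i> * complex_of_real x)" for x
  have supp: "d j = 0" if "j = N \<or> \<not> tri j N" for j
    using that Ec Ec' unfolding E_coeffs_def d_def by (cases "j = N") auto
  have orth: "(\<Sum>l\<in>R. d l * mu k (l - j)) = 0" if "tri j N" for j
  proof -
    have "(\<Sum>l\<in>R. c l * mu k (l - j)) = 0"
      using ip_expoly[OF k, of N c j] Ec that unfolding E_coeffs_def R_def by simp
    moreover have "(\<Sum>l\<in>R. c' l * mu k (l - j)) = 0"
      using ip_expoly[OF k, of N c' j] Ec' that unfolding E_coeffs_def R_def by simp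
    ultimately show ?thesis unfolding d_def by (simp add: left_diff_distrib sum_subtractf)
  qed
  have "complex_of_real (integral {-pi..pi} (\<lambda>x. (cmod (F x))^2 * wk k x))
      = (\<Sum>j\<in>R. cnj (d j) * (\<Sum>l\<in>R. d l * mu k (l - j)))"
    unfolding F_def R_def normsq_expoly[OF k] ip_expoly[OF k] ..
  also have "\<dots> = 0"
  proof (rule sum.neutral, rule ballI)
    fix j assume "j \<in> R"
    show "cnj (d j) * (\<Sum>l\<in>R. d l * mu k (l - j)) = 0"
    proof (cases "tri j N")
      case True then show ?thesis using orth by simp
    next
      case False then show ?thesis using supp by simp
    qed
  qed
  finally have I0: "integral {-pi..pi} (\<lambda>x. (cmod (F x))^2 * wk k x) = 0" by simp
  have Fc: "continuous_on S F" for S unfolding F_def by (rule expoly_cont)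
  have gc: "continuous_on S (\<lambda>x. (cmod (F x))^2 * wk k x)" for S
    by (intro continuous_intros wk_cont k Fc)
  have ghi: "((\<lambda>x. (cmod (F x))^2 * wk k x) has_integral 0) {-pi..pi}"
  proof -
    have "(\<lambda>x. (cmod (F x))^2 * wk k x) integrable_on {-pi..pi}" by (rule integrable_continuous_interval[OF gc])
    from integrable_integral[OF this] I0 show ?thesis by simp
  qed
  have g0: "(cmod (F x))^2 * wk k x = 0" if "x \<in> {-pi..pi}" for x
    using has_integral_0_cbox_imp_0[of "-pi" pi "\<lambda>x. (cmod (F x))^2 * wk k x" x] gc ghi that
    using pi_gt_zero by (auto simp: wk_nonneg)
  have F0: "F x = 0" if "x \<in> {-pi..pi} - {-pi, 0, pi}" for x
  proof -
    have x: "-pi < x" "x < pi" "x \<noteq> 0" using that by auto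
    have "sin x \<noteq> 0"
    proof (cases "x > 0")
      case True then show ?thesis using x sin_gt_zero[of x] by simp
    next
      case False
      then have "sin (-x) > 0" using x by (intro sin_gt_zero) auto
      then show ?thesis by simp
    qed
    then have "wk k x > 0" by (rule wk_pos)
    moreover have "(cmod (F x))^2 * wk k x = 0" using g0 that by simp
    ultimately show ?thesis by simp
  qed
  have dpar: "d l = 0" if "\<not> even (l - N)" for l
    using supp[of l] tri_a5[of l N] that by auto
  have dm: "d m = 0" if m: "m \<in> R" "even (m - N)" for m
  proof -
    have "ipk 0 F (e m) = 0"
    proof -
      have "ipk 0 F (e m) = integral {-pi..pi} (\<lambda>x. 0)"
        unfolding ipk_def
        by (rule integral_spike[of "{-pi, 0, pi}"]) (auto simp: F0)
      then show ?thesis by simp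
    qed
    moreover have "ipk 0 F (e m) = (\<Sum>l\<in>R. d l * mu 0 (l - m))"
      unfolding F_def e_def R_def by (rule ip_expoly) simp
    moreover have "(\<Sum>l\<in>R. d l * mu 0 (l - m)) = (\<Sum>l\<in>R. if l = m then d m * complex_of_real (2 * pi) else 0)"
    proof (rule sum.cong[OF refl])
      fix l assume "l \<in> R"
      show "d l * mu 0 (l - m) = (if l = m then d m * complex_of_real (2 * pi) else 0)"
      proof (cases "d l = 0")
        case True then show ?thesis by auto
      next
        case False
        then have "even (l - N)" using dpar by auto
        then have "even (l - m)" using m(2) by presburger
        then obtain r where r: "l - m = 2 * r" by (rule evenE)
        have "mu 0 (l - m) = complex_of_real (2 * Mo 0 r)" unfolding r by (rule mu_even) simp
        moreover have "(r = 0) = (l = m)" using r by auto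
        ultimately show ?thesis by (auto simp: Mo_zero_k0)
      qed
    qed
    moreover have "\<dots> = d m * complex_of_real (2 * pi)" using m(1) unfolding R_def by (simp add: sum.delta)
    ultimately show ?thesis by simp
  qed
  show ?thesis
  proof
    fix j
    show "c j = c' j"
    proof (cases "j \<in> R \<and> even (j - N)")
      case True then show ?thesis using dm[of j] unfolding d_def by simp
    next
      case False
      then have "j \<noteq> N \<and> \<not> tri j N" using tri_a5[of j N] tri_a6[of j N] unfolding R_def by auto
      then show ?thesis using Ec Ec' unfolding E_coeffs_def by auto
    qed
  qed
qed



definition cP :: "real \<Rightarrow> nat \<Rightarrow> int \<Rightarrow> complex" where
  "cP k n j = (if even (j + int n + 1) then complex_of_real (ac k n ((j + int n - 1) div 2)) else 0)"

definition cM :: "real \<Rightarrow> nat \<Rightarrow> int \<Rightarrow> complex" where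
  "cM k n j = (if even (j + int n) then complex_of_real (ac k n ((int n - j) div 2)) else 0)"

lemma sum_coeff_reindex:
  fixes c :: "int \<Rightarrow> complex" and G :: "int \<Rightarrow> complex" and \<phi> :: "int \<Rightarrow> int"
  assumes "finite L" "\<phi> ` P \<subseteq> L" "inj_on \<phi> P"
    and "\<And>l. l \<in> L \<Longrightarrow> l \<notin> \<phi> ` P \<Longrightarrow> c l = 0"
    and "\<And>p. p \<in> P \<Longrightarrow> c (\<phi> p) = b p"
  shows "(\<Sum>l\<in>L. c l * G l) = (\<Sum>p\<in>P. b p * G (\<phi> p))"
proof -
  have "(\<Sum>l\<in>L. c l * G l) = (\<Sum>l\<in>\<phi> ` P. c l * G l)"
    using assms(1,2,4) by (intro sum.mono_neutral_right) auto
  also have "\<dots> = (\<Sum>p\<in>P. c (\<phi> p) * G (\<phi> p))" using assms(3) by (simp add: sum.reindex)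
  also have "\<dots> = (\<Sum>p\<in>P. b p * G (\<phi> p))" using assms(5) by simp
  finally show ?thesis .
qed

lemma ac_nn: assumes "k \<ge> 0" shows "ac k n (int n) = 1"
proof -
  have "pochhammer (k+1) n > 0" using assms by (intro pochhammer_pos) simp
  then show ?thesis by (simp add: ac_def)
qed

lemma sum_ofreal_SS:
  "(\<Sum>p\<in>{0..int n}. complex_of_real (ac k n p) * complex_of_real (2 * Mo k (p - q)))
     = complex_of_real (2 * SS k n (Mo k) q)"
  unfolding SS_def by (simp add: sum_distrib_left mult.left_commute)

lemma ip_cP:
  assumes k: "k \<ge> 0" and j: "even (j + int n + 1)"
  shows "ipk k (\<lambda>x. expoly (int n + 1) (cP k n) (\<i> * complex_of_real x)) (\<lambda>x. exp (\<i> * complex_of_real (real_of_int j * x)))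
       = complex_of_real (2 * SS k n (Mo k) ((j + int n - 1) div 2))"
proof -
  define q where "q = (j + int n - 1) div 2"
  have jq: "j = 2 * q - int n + 1" using j unfolding q_def by presburger
  have "ipk k (\<lambda>x. expoly (int n + 1) (cP k n) (\<i> * complex_of_real x)) (\<lambda>x. exp (\<i> * complex_of_real (real_of_int j * x)))
      = (\<Sum>l\<in>{-\<bar>int n + 1\<bar>..\<bar>int n + 1\<bar>}. cP k n l * mu k (l - j))"
    by (rule ip_expoly[OF k])
  also have "\<dots> = (\<Sum>p\<in>{0..int n}. complex_of_real (ac k n p) * mu k ((2 * p - int n + 1) - j))"
  proof (rule sum_coeff_reindex)
    show "(\<lambda>p. 2 * p - int n + 1) ` {0..int n} \<subseteq> {-\<bar>int n + 1\<bar>..\<bar>int n + 1\<bar>}" by auto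
    show "inj_on (\<lambda>p. 2 * p - int n + 1) {0..int n}" by (auto simp: inj_on_def)
  next
    fix l assume l: "l \<notin> (\<lambda>p. 2 * p - int n + 1) ` {0..int n}"
    show "cP k n l = 0"
    proof (cases "even (l + int n + 1)")
      case True
      define p where "p = (l + int n - 1) div 2"
      have "l = 2 * p - int n + 1" using True unfolding p_def by presburger
      then have "p \<notin> {0..int n}" using l by auto
      then show ?thesis using True unfolding cP_def p_def[symmetric] by (auto simp: ac_out)
    qed (simp add: cP_def)
  next
    fix p assume "p \<in> {0..int n}"
    have "(2 * p - int n + 1 + int n - 1) div 2 = p" by simp
    then show "cP k n (2 * p - int n + 1) = complex_of_real (ac k n p)" unfolding cP_def by simp
  qed simp
  also have "\<dots> = (\<Sum>p\<in>{0..int n}. complex_of_real (ac k n p) * complex_of_real (2 * Mo k (p - q)))"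
  proof (rule sum.cong[OF refl])
    fix p
    have e: "(2 * p - int n + 1) - j = 2 * (p - q)" unfolding jq by simp
    have "mu k ((2 * p - int n + 1) - j) = complex_of_real (2 * Mo k (p - q))" unfolding e by (rule mu_even[OF k])
    then show "complex_of_real (ac k n p) * mu k ((2 * p - int n + 1) - j) = complex_of_real (ac k n p) * complex_of_real (2 * Mo k (p - q))"
      by simp
  qed
  also have "\<dots> = complex_of_real (2 * SS k n (Mo k) q)" by (rule sum_ofreal_SS)
  finally show ?thesis unfolding q_def .
qed

lemma ip_cM:
  assumes k: "k \<ge> 0" and j: "even (j + int n)"
  shows "ipk k (\<lambda>x. expoly (- int n) (cM k n) (\<i> * complex_of_real x)) (\<lambda>x. exp (\<i> * complex_of_real (real_of_int j * x)))
       = complex_of_real (2 * SS k n (Mo k) ((int n - j) div 2))"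
proof -
  define q where "q = (int n - j) div 2"
  have jq: "j = int n - 2 * q" using j unfolding q_def by presburger
  have "ipk k (\<lambda>x. expoly (- int n) (cM k n) (\<i> * complex_of_real x)) (\<lambda>x. exp (\<i> * complex_of_real (real_of_int j * x)))
      = (\<Sum>l\<in>{-\<bar>- int n\<bar>..\<bar>- int n\<bar>}. cM k n l * mu k (l - j))"
    by (rule ip_expoly[OF k])
  also have "\<dots> = (\<Sum>p\<in>{0..int n}. complex_of_real (ac k n p) * mu k ((int n - 2 * p) - j))"
  proof (rule sum_coeff_reindex)
    show "(\<lambda>p. int n - 2 * p) ` {0..int n} \<subseteq> {-\<bar>- int n\<bar>..\<bar>- int n\<bar>}" by auto
    show "inj_on (\<lambda>p. int n - 2 * p) {0..int n}" by (auto simp: inj_on_def)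
  next
    fix l assume l: "l \<notin> (\<lambda>p. int n - 2 * p) ` {0..int n}"
    show "cM k n l = 0"
    proof (cases "even (l + int n)")
      case True
      define p where "p = (int n - l) div 2"
      have "l = int n - 2 * p" using True unfolding p_def by presburger
      then have "p \<notin> {0..int n}" using l by auto
      then show ?thesis using True unfolding cM_def p_def[symmetric] by (auto simp: ac_out)
    qed (simp add: cM_def)
  next
    fix p assume "p \<in> {0..int n}"
    have "(int n - (int n - 2 * p)) div 2 = p" by simp
    moreover have "even (int n - 2 * p + int n)" by presburger
    ultimately show "cM k n (int n - 2 * p) = complex_of_real (ac k n p)" unfolding cM_def by simp
  qed simp
  also have "\<dots> = (\<Sum>p\<in>{0..int n}. complex_of_real (ac k n p) * complex_of_real (2 * Mo k (p - q)))"
  proof (rule sum.cong[OF refl])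
    fix p
    have e: "(int n - 2 * p) - j = 2 * (q - p)" unfolding jq by simp
    have s: "Mo k (q - p) = Mo k (p - q)" using Mo_sym[of k "p - q"] by simp
    have "mu k ((int n - 2 * p) - j) = complex_of_real (2 * Mo k (p - q))" unfolding e s[symmetric] by (rule mu_even[OF k])
    then show "complex_of_real (ac k n p) * mu k ((int n - 2 * p) - j) = complex_of_real (ac k n p) * complex_of_real (2 * Mo k (p - q))"
      by simp
  qed
  also have "\<dots> = complex_of_real (2 * SS k n (Mo k) q)" by (rule sum_ofreal_SS)
  finally show ?thesis unfolding q_def .
qed

lemma EP: assumes k: "k \<ge> 0" shows "E_coeffs k (int n + 1) (cP k n)"
  unfolding E_coeffs_def
proof (intro conjI allI impI)
  have "(int n + 1 + int n - 1) div 2 = int n" by simp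
  moreover have "even (int n + 1 + int n + 1)" by presburger
  ultimately show "cP k n (int n + 1) = 1" unfolding cP_def using ac_nn[OF k] by simp
next
  fix j assume a: "j \<noteq> int n + 1 \<and> \<not> tri j (int n + 1)"
  show "cP k n j = 0"
  proof (cases "even (j + int n + 1)")
    case True
    have "\<not> (0 \<le> (j + int n - 1) div 2 \<and> (j + int n - 1) div 2 \<le> int n)"
      using tri_a1[OF True] a by auto
    then have "ac k n ((j + int n - 1) div 2) = 0" by (intro ac_out) auto
    then show ?thesis using True unfolding cP_def by simp
  qed (simp add: cP_def)
next
  fix j assume t: "tri j (int n + 1)"
  note tt = tri_a2[OF t]
  show "ipk k (\<lambda>x. expoly (int n + 1) (cP k n) (\<i> * complex_of_real x)) (\<lambda>x. exp (\<i> * complex_of_real (real_of_int j * x))) = 0"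
    unfolding ip_cP[OF k conjunct1[OF tt]]
    using SS_orth[OF Mo_rel[OF k] k, of "(j + int n - 1) div 2" n] tt by simp
qed

lemma EM: assumes k: "k \<ge> 0" shows "E_coeffs k (- int n) (cM k n)"
  unfolding E_coeffs_def
proof (intro conjI allI impI)
  have "(int n - - int n) div 2 = int n" by simp
  moreover have "even (- int n + int n)" by presburger
  ultimately show "cM k n (- int n) = 1" unfolding cM_def using ac_nn[OF k] by simp
next
  fix j assume a: "j \<noteq> - int n \<and> \<not> tri j (- int n)"
  show "cM k n j = 0"
  proof (cases "even (j + int n)")
    case True
    have "\<not> (0 \<le> (int n - j) div 2 \<and> (int n - j) div 2 \<le> int n)"
      using tri_a3[OF True] a by auto
    then have "ac k n ((int n - j) div 2) = 0" by (intro ac_out) auto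
    then show ?thesis using True unfolding cM_def by simp
  qed (simp add: cM_def)
next
  fix j assume t: "tri j (- int n)"
  note tt = tri_a4[OF t]
  show "ipk k (\<lambda>x. expoly (- int n) (cM k n) (\<i> * complex_of_real x)) (\<lambda>x. exp (\<i> * complex_of_real (real_of_int j * x))) = 0"
    unfolding ip_cM[OF k conjunct1[OF tt]]
    using SS_orth[OF Mo_rel[OF k] k, of "(int n - j) div 2" n] tt by simp
qed

lemma norm_from_coeffs:
  assumes k: "k \<ge> 0" and Ec: "E_coeffs k N c"
  shows "complex_of_real (integral {-pi..pi} (\<lambda>x. (cmod (expoly N c (\<i> * complex_of_real x)))^2 * wk k x))
       = ipk k (\<lambda>x. expoly N c (\<i> * complex_of_real x)) (\<lambda>x. exp (\<i> * complex_of_real (real_of_int N * x)))"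
proof -
  define I where "I j = ipk k (\<lambda>x. expoly N c (\<i> * complex_of_real x)) (\<lambda>x. exp (\<i> * complex_of_real (real_of_int j * x)))" for j
  have "complex_of_real (integral {-pi..pi} (\<lambda>x. (cmod (expoly N c (\<i> * complex_of_real x)))^2 * wk k x))
      = (\<Sum>j\<in>{-\<bar>N\<bar>..\<bar>N\<bar>}. cnj (c j) * I j)"
    unfolding I_def by (rule normsq_expoly[OF k])
  also have "\<dots> = (\<Sum>j\<in>{-\<bar>N\<bar>..\<bar>N\<bar>}. if j = N then I N else 0)"
  proof (rule sum.cong[OF refl])
    fix j
    show "cnj (c j) * I j = (if j = N then I N else 0)"
    proof (cases "j = N")
      case True then show ?thesis using Ec unfolding E_coeffs_def by simp
    next
      case False
      show ?thesis
      proof (cases "tri j N")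
        case True then show ?thesis using Ec False unfolding E_coeffs_def I_def by simp
      next
        case f2: False then show ?thesis using Ec False unfolding E_coeffs_def by simp
      qed
    qed
  qed
  also have "\<dots> = I N"
  proof -
    have "N \<in> {-\<bar>N\<bar>..\<bar>N\<bar>}" by auto
    then show ?thesis by (simp only: sum.delta finite_atLeastAtMost_int if_True)
  qed
  finally show ?thesis unfolding I_def .
qed

lemma HO_E_eq: assumes k: "k \<ge> 0" and Ec: "E_coeffs k N c" shows "HO_E k N = expoly N c"
proof -
  have "(THE c. E_coeffs k N c) = c"
    apply (rule the_equality)
     apply (rule Ec)
    apply (rule E_unique[OF k])
     apply assumption
    apply (rule Ec)
    done
  then show ?thesis unfolding HO_E_def by simp
qed

lemma HO_normsq_eq:
  assumes k: "k \<ge> 0" and Ec: "E_coeffs k N c"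
  shows "complex_of_real (HO_normsq k N) = ipk k (\<lambda>x. expoly N c (\<i> * complex_of_real x)) (\<lambda>x. exp (\<i> * complex_of_real (real_of_int N * x)))"
  unfolding HO_normsq_def HO_E_eq[OF k Ec] by (rule norm_from_coeffs[OF k Ec])

lemma normP: assumes k: "k \<ge> 0" shows "HO_normsq k (int n + 1) = 2 * SS k n (Mo k) (int n)"
proof -
  have "complex_of_real (HO_normsq k (int n + 1)) = complex_of_real (2 * SS k n (Mo k) ((int n + 1 + int n - 1) div 2))"
    unfolding HO_normsq_eq[OF k EP[OF k]] by (rule ip_cP[OF k]) presburger
  moreover have "(int n + 1 + int n - 1) div 2 = int n" by simp
  ultimately show ?thesis by (simp only: of_real_eq_iff)
qed

lemma normM: assumes k: "k \<ge> 0" shows "HO_normsq k (- int n) = 2 * SS k n (Mo k) (int n)"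
proof -
  have "complex_of_real (HO_normsq k (- int n)) = complex_of_real (2 * SS k n (Mo k) ((int n - - int n) div 2))"
    unfolding HO_normsq_eq[OF k EM[OF k]] by (rule ip_cM[OF k]) presburger
  moreover have "(int n - - int n) div 2 = int n" by simp
  ultimately show ?thesis by (simp only: of_real_eq_iff)
qed



lemma gamma_step_aux:
  fixes f g1 G a b c :: real
  assumes "b \<noteq> 0" "G \<noteq> 0"
  shows "f * g1 / G^2 * (a * c / b^2) = a * f * (c * g1) / (b * G)^2"
  using assms by (simp add: field_simps power2_eq_square)

lemma Gamma_real_plus1: "(x::real) > 0 \<Longrightarrow> Gamma (x + 1) = x * Gamma x"
  by (rule Gamma_plus1) auto

lemma prod_gamma:
  assumes k: "k \<ge> 0"
  shows "(\<Prod>j<n. (real j + 1) * (real j + 2*k + 1) / (real j + k + 1)^2) * (Gamma (2*k+1) / Gamma (k+1)^2)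
       = fact n * Gamma (real n + 2*k + 1) / Gamma (real n + k + 1)^2"
proof (induction n)
  case 0 then show ?case by simp
next
  case (Suc n)
  have g1: "Gamma (real (Suc n) + 2*k + 1) = (real n + 2*k + 1) * Gamma (real n + 2*k + 1)"
    using Gamma_real_plus1[of "real n + 2*k + 1"] k by (simp add: add_ac)
  have g2: "Gamma (real (Suc n) + k + 1) = (real n + k + 1) * Gamma (real n + k + 1)"
    using Gamma_real_plus1[of "real n + k + 1"] k by (simp add: add_ac)
  have "Gamma (real n + k + 1) > 0" by (rule Gamma_real_pos) (use k in simp)
  then have G: "Gamma (real n + k + 1) \<noteq> 0" by simp
  have b: "real n + k + 1 \<noteq> 0" using k by simp
  have "(\<Prod>j<Suc n. (real j + 1) * (real j + 2*k + 1) / (real j + k + 1)^2) * (Gamma (2*k+1) / Gamma (k+1)^2)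
      = ((\<Prod>j<n. (real j + 1) * (real j + 2*k + 1) / (real j + k + 1)^2) * (Gamma (2*k+1) / Gamma (k+1)^2))
        * ((real n + 1) * (real n + 2*k + 1) / (real n + k + 1)^2)"
    by (simp add: mult_ac)
  also have "\<dots> = fact n * Gamma (real n + 2*k + 1) / Gamma (real n + k + 1)^2 * ((real n + 1) * (real n + 2*k + 1) / (real n + k + 1)^2)"
    unfolding Suc ..
  also have "\<dots> = (real n + 1) * fact n * ((real n + 2*k + 1) * Gamma (real n + 2*k + 1)) / ((real n + k + 1) * Gamma (real n + k + 1))^2"
    by (rule gamma_step_aux[OF b G])
  also have "\<dots> = fact (Suc n) * Gamma (real (Suc n) + 2*k + 1) / Gamma (real (Suc n) + k + 1)^2"
    unfolding g1 g2 by (simp add: algebra_simps)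
  finally show ?case .
qed

theorem mainTheorem3:
  fixes k :: real and n :: nat
  assumes "k \<ge> 0"
  shows "HO_normsq k (int n + 1) = HO_normsq k (- int n) \<and>
         HO_normsq k (- int n) =
           pi * 2 powr (1 - 2 * k) * fact n * Gamma (real n + 2 * k + 1) / (Gamma (real n + k + 1))\<^sup>2"
proof
  show "HO_normsq k (int n + 1) = HO_normsq k (- int n)"
    unfolding normP[OF assms] normM[OF assms] ..
next
  define P where "P = (\<Prod>j<n. (real j + 1) * (real j + 2*k + 1) / (real j + k + 1)^2)"
  have S: "SS k n (Mo k) (int n) = Mo k 0 * P"
    unfolding P_def by (rule SS_diag[OF Mo_rel[OF assms] Mo_sym assms])
  have t: "(2::real) powr (1 - 2 * k) = 2 / 2 powr (2 * k)" by (simp add: powr_diff)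
  have tp: "(2::real) powr (2 * k) > 0" by simp
  have "HO_normsq k (- int n) = 2 * (Mo k 0 * P)" unfolding normM[OF assms] S ..
  also have "\<dots> = pi * (2 / 2 powr (2 * k)) * (P * (Gamma (2*k+1) / Gamma (k+1)^2))"
    unfolding Mo0[OF assms] using tp by (simp add: field_simps)
  also have "P * (Gamma (2*k+1) / Gamma (k+1)^2) = fact n * Gamma (real n + 2*k + 1) / Gamma (real n + k + 1)^2"
    unfolding P_def by (rule prod_gamma[OF assms])
  finally show "HO_normsq k (- int n) =
           pi * 2 powr (1 - 2 * k) * fact n * Gamma (real n + 2 * k + 1) / (Gamma (real n + k + 1))\<^sup>2"
    unfolding t by (simp add: mult.assoc)
qed


end
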